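(* Let $p,q$ be complex numbers with $|p|<1$, and let $a,b,c,A,B,C$ be nonzero complex numbers such that all expressions below are well defined. Then for every $n=0,1,2,\ldots$, \begin{align*} &\sum_{k=0}^n\frac{\theta(aq^{2k};p)}{\theta(a;p)}\, \frac{(a,b,c,a/(bc);q,p)_k}{(q,aq/b,aq/c,bcq;q,p)_k}\, \frac{(q^{-n},\,Bq^{-n}/A,\,Cq^{-n}/A,\,q^{-n}/(BC);q,p)_k}{(q^{-n}/A,\,q^{-n}/B,\,q^{-n}/C,\,BCq^{-n}/A;q,p)_k}\,q^k\\ &=\frac{(aq,bq,cq,aq/(bc),Aq/B,Aq/C,BCq;q,p)_n}{(Aq,Bq,Cq,Aq/(BC),aq/b,aq/c,bcq;q,p)_n}\\ &\quad\times\sum_{k=0}^n\frac{\theta(Aq^{2k};p)}{\theta(A;p)}\, \frac{(A,B,C,A/(BC);q,p)_k}{(q,Aq/B,Aq/C,BCq;q,p)_k}\, \frac{(q^{-n},\,bq^{-n}/a,\,cq^{-n}/a,\,q^{-n}/(bc);q,p)_k}{(q^{-n}/a,\,q^{-n}/b,\,q^{-n}/c,\,bcq^{-n}/a;q,p)_k}\,q^k. \end{align*}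
   Context: For $|p|<1$ and $x\neq 0$, $\theta(x;p)=(x;p)_\infty(p/x;p)_\infty$ where $(x;p)_\infty=\prod_{k\ge 0}(1-xp^k)$, and $\theta(x_1,\dots,x_m;p)=\prod_{i=1}^m\theta(x_i;p)$. For $a\neq 0$ and integer $n\ge 0$, $(a;q,p)_n=\prod_{k=0}^{n-1}\theta(aq^k;p)$ (empty product $=1$), and $(a_1,\dots,a_m;q,p)_n=\prod_{i=1}^m(a_i;q,p)_n$. *)

theory Defs
  imports "HOL-Analysis.Analysis"
begin

definition qpoch_inf :: "complex \<Rightarrow> complex \<Rightarrow> complex" where
  "qpoch_inf x p = (\<Prod>k. (1 - x * p ^ k))"

definition theta :: "complex \<Rightarrow> complex \<Rightarrow> complex" where
  "theta x p = qpoch_inf x p * qpoch_inf (p / x) p"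

definition epoch :: "complex \<Rightarrow> complex \<Rightarrow> complex \<Rightarrow> nat \<Rightarrow> complex" where
  "epoch a q p n = (\<Prod>k<n. theta (a * q ^ k) p)"

definition epochs :: "complex list \<Rightarrow> complex \<Rightarrow> complex \<Rightarrow> nat \<Rightarrow> complex" where
  "epochs as q p n = prod_list (map (\<lambda>a. epoch a q p n) as)"

end

theory Submission
  imports Defs "HOL-Complex_Analysis.Complex_Analysis"
begin


lemma qp_abs_conv:
  assumes "norm p < (1::real)"
  shows "abs_convergent_prod (\<lambda>k. 1 - x * (p::complex) ^ k)"
proof -
  have "summable (\<lambda>k. norm x * norm p ^ k)"
    using assms by (intro summable_mult summable_geometric) auto
  then show ?thesis
    by (subst abs_convergent_prod_conv_summable) (simp add: norm_mult norm_power)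
qed

lemma qp_conv:
  assumes "norm p < (1::real)"
  shows "convergent_prod (\<lambda>k. 1 - x * (p::complex) ^ k)"
  using abs_convergent_prod_imp_convergent_prod qp_abs_conv assms by blast

lemma qp_shift:
  assumes "norm p < (1::real)"
  shows "qpoch_inf x p = (1 - x) * qpoch_inf (p * x) p"
proof -
  have h: "(\<lambda>k. 1 - x * p ^ k) has_prod ((\<Prod>k<1. 1 - x * p ^ k) * (\<Prod>k. 1 - x * p ^ (k+1)))"
    by (rule has_prod_ignore_initial_segment'[OF qp_conv[OF assms]])
  have e1: "(\<Prod>k<1. 1 - x * p ^ k) = 1 - x" by simp
  have e2: "(\<Prod>k. 1 - x * p ^ (k+1)) = qpoch_inf (p*x) p"
    unfolding qpoch_inf_def by (rule prodinf_cong) (simp add: power_Suc)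
  have "(\<lambda>k. 1 - x * p ^ k) has_prod ((1 - x) * qpoch_inf (p*x) p)"
    using h by (simp only: e1 e2)
  then show ?thesis unfolding qpoch_inf_def by (metis has_prod_unique)
qed


lemma theta_inv:
  assumes "norm p < (1::real)" "x \<noteq> 0"
  shows "theta (inverse x) p = - theta x p / x"
proof -
  have a: "qpoch_inf (inverse x) p = (1 - inverse x) * qpoch_inf (p/x) p"
    using qp_shift[OF assms(1), of "inverse x"] by (simp add: field_simps)
  have b: "qpoch_inf x p = (1 - x) * qpoch_inf (p*x) p"
    using qp_shift[OF assms(1), of x] by simp
  have "theta (inverse x) p = (1 - inverse x) * qpoch_inf (p/x) p * qpoch_inf (p*x) p"
    unfolding theta_def a by (simp add: field_simps)
  also have "\<dots> = - ((1 - x) * qpoch_inf (p*x) p * qpoch_inf (p/x) p) / x"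
    using assms(2) by (simp add: field_simps)
  also have "\<dots> = - theta x p / x" unfolding theta_def b by simp
  finally show ?thesis .
qed

lemma theta_inv':
  assumes "norm p < (1::real)" "x \<noteq> 0"
  shows "theta x p = - x * theta (inverse x) p"
  using theta_inv[OF assms] assms(2) by (simp add: field_simps)

lemma theta_p:
  assumes "norm p < (1::real)" "x \<noteq> 0" "p \<noteq> 0"
  shows "theta (p * x) p = - theta x p / x"
proof -
  have a: "qpoch_inf (inverse x) p = (1 - inverse x) * qpoch_inf (p/x) p"
    using qp_shift[OF assms(1), of "inverse x"] by (simp add: field_simps)
  have b: "qpoch_inf x p = (1 - x) * qpoch_inf (p*x) p"
    using qp_shift[OF assms(1), of x] by simp
  have "theta (p*x) p = qpoch_inf (p*x) p * qpoch_inf (inverse x) p"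
    unfolding theta_def using assms by (simp add: field_simps)
  also have "\<dots> = - ((1 - x) * qpoch_inf (p*x) p * qpoch_inf (p/x) p) / x"
    unfolding a using assms(2) by (simp add: field_simps)
  also have "\<dots> = - theta x p / x" unfolding theta_def b by simp
  finally show ?thesis .
qed

lemma theta_1:
  assumes "norm p < (1::real)"
  shows "theta 1 p = 0"
  unfolding theta_def using qp_shift[OF assms, of 1] by simp

lemma qp_zero:
  assumes "norm p < (1::real)" "qpoch_inf x p = 0"
  shows "\<exists>k. x * p ^ k = 1"
proof -
  have "(\<lambda>k. 1 - x * p ^ k) has_prod qpoch_inf x p"
    using qp_conv[OF assms(1)] unfolding qpoch_inf_def by (simp add: convergent_prod_has_prod)
  then have "0 \<in> range (\<lambda>k. 1 - x * p ^ k)" using assms(2) has_prod_eq_0_iff by metis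
  then show ?thesis by (metis (no_types, lifting) eq_iff_diff_eq_0 imageE)
qed

lemma qp_p_nonzero:
  assumes "norm p < (1::real)"
  shows "qpoch_inf p p \<noteq> 0"
proof
  assume "qpoch_inf p p = 0"
  then obtain k where "p * p ^ k = 1" using qp_zero[OF assms] by blast
  then have "norm p ^ Suc k = 1" by (metis norm_one norm_power power_Suc)
  moreover have "norm p ^ k \<le> 1" using assms by (simp add: power_le_one)
  then have "norm p * norm p ^ k \<le> norm p" by (simp add: mult_left_le)
  then have "norm p ^ Suc k < 1" using assms by simp
  ultimately show False by simp
qed

lemma theta_zero:
  assumes "norm p < (1::real)" "x \<noteq> 0" "p \<noteq> 0" "theta x p = 0"
  shows "\<exists>k::int. x = p powi k"
proof -
  have "qpoch_inf x p = 0 \<or> qpoch_inf (p/x) p = 0" using assms(4) unfolding theta_def by simp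
  then show ?thesis
  proof
    assume "qpoch_inf x p = 0"
    then obtain k where "x * p ^ k = 1" using qp_zero[OF assms(1)] by blast
    then have "x = p powi (- int k)" using assms(3)
      by (simp add: power_int_minus field_simps)
    then show ?thesis by blast
  next
    assume "qpoch_inf (p/x) p = 0"
    then obtain k where "p / x * p ^ k = 1" using qp_zero[OF assms(1)] by blast
    then have "x = p ^ Suc k" using assms(2,3)
      by (simp add: field_simps)
    then have "x = p powi (int (Suc k))" by (simp only: power_int_of_nat)
    then show ?thesis by blast
  qed
qed


lemma qp_unif:
  assumes "norm p < (1::real)" "R > 0"
  shows "uniform_limit (cball 0 R) (\<lambda>N x. \<Prod>k<N. 1 - x * p ^ k) (\<lambda>x. qpoch_inf x p) sequentially"
proof -
  have uc: "uniformly_convergent_on (cball 0 R) (\<lambda>N x. \<Prod>k<N. 1 - x * p ^ k)"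
  proof (rule uniformly_convergent_on_prod')
    show "uniformly_convergent_on (cball 0 R) (\<lambda>N x. \<Sum>n<N. norm (1 - x * p ^ n - 1))"
    proof (rule Weierstrass_m_test')
      fix n and x :: complex assume "x \<in> cball 0 R"
      then have "norm x \<le> R" by simp
      then show "norm (norm (1 - x * p ^ n - 1)) \<le> R * norm p ^ n"
        by (simp add: norm_mult norm_power mult_right_mono)
    next
      show "summable (\<lambda>n. R * norm p ^ n)"
        using assms by (intro summable_mult summable_geometric) auto
    qed
  next
    fix n show "continuous_on (cball 0 R) (\<lambda>x. 1 - x * p ^ n)" by (intro continuous_intros)
  next
    show "compact (cball (0::complex) R)" by simp
  qed
  then obtain g where g: "uniform_limit (cball 0 R) (\<lambda>N x. \<Prod>k<N. 1 - x * p ^ k) g sequentially"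
    by (auto simp: uniformly_convergent_on_def)
  also have "?this \<longleftrightarrow> uniform_limit (cball 0 R) (\<lambda>N x. \<Prod>k<N. 1 - x * p ^ k) (\<lambda>x. qpoch_inf x p) sequentially"
  proof (intro uniform_limit_cong)
    fix z :: complex assume "z \<in> cball 0 R"
    have "(\<lambda>n. \<Prod>k<n. 1 - z * p ^ k) \<longlonglongrightarrow> g z"
      by (rule tendsto_uniform_limitI[OF g]) fact
    then have "(\<lambda>n. \<Prod>k<Suc n. 1 - z * p ^ k) \<longlonglongrightarrow> g z"
      by (rule LIMSEQ_Suc)
    moreover have "(\<lambda>n. \<Prod>k<Suc n. 1 - z * p ^ k) \<longlonglongrightarrow> qpoch_inf z p"
      using convergent_prod_LIMSEQ[OF qp_conv[OF assms(1), of z]] unfolding lessThan_Suc_atMost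
      by (simp add: qpoch_inf_def)
    ultimately show "g z = qpoch_inf z p"
      using tendsto_unique by force
  qed auto
  finally show ?thesis .
qed

lemma qp_holo:
  assumes "norm p < (1::real)"
  shows "(\<lambda>x. qpoch_inf x p) holomorphic_on A"
proof (rule holomorphic_on_subset)
  show "(\<lambda>x. qpoch_inf x p) holomorphic_on UNIV"
  proof (rule holomorphic_uniform_sequence)
    fix z :: complex
    have *: "uniform_limit (cball 0 (norm z + 1)) (\<lambda>N x. \<Prod>k<N. 1 - x * p ^ k) (\<lambda>x. qpoch_inf x p) sequentially"
      by (rule qp_unif[OF assms]) (auto intro: add_nonneg_pos)
    hence "uniform_limit (cball z 1) (\<lambda>N x. \<Prod>k<N. 1 - x * p ^ k) (\<lambda>x. qpoch_inf x p) sequentially"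
      by (rule uniform_limit_on_subset) (simp add: cball_subset_cball_iff)
    thus "\<exists>d>0. cball z d \<subseteq> UNIV \<and> uniform_limit (cball z d) (\<lambda>N x. \<Prod>k<N. 1 - x * p ^ k) (\<lambda>x. qpoch_inf x p) sequentially"
      by (intro exI[of _ 1]) auto
  next
    show "open (UNIV::complex set)" by simp
  next
    fix n show "(\<lambda>x. \<Prod>k<n. 1 - x * p ^ k) holomorphic_on UNIV"
      by (intro holomorphic_on_prod holomorphic_on_diff holomorphic_on_const holomorphic_on_mult holomorphic_on_ident)
  qed
qed auto

lemma theta_holo:
  assumes "norm p < (1::real)" "0 \<notin> A"
  shows "(\<lambda>x. theta x p) holomorphic_on A"
proof -
  have "(\<lambda>x. qpoch_inf x p * qpoch_inf (p / x) p) holomorphic_on A"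
    using assms
    by (intro holomorphic_intros holomorphic_on_compose[OF _ qp_holo[OF assms(1)], unfolded o_def]) auto
  then show ?thesis unfolding theta_def .
qed



lemma qp_deriv:
  fixes F :: "complex \<Rightarrow> complex"
  assumes hol: "F holomorphic_on -{0}" and qp: "\<And>x. x \<noteq> 0 \<Longrightarrow> F (p*x) = F x / x^2"
    and p: "p \<noteq> 0" and x0: "x0 \<noteq> 0" "F x0 = 0"
  shows "deriv F (p*x0) = deriv F x0 / (p * x0^2)"
proof -
  have dF: "\<And>z. z \<noteq> 0 \<Longrightarrow> (F has_field_derivative deriv F z) (at z)"
    using hol by (intro holomorphic_derivI) auto
  have d1: "((\<lambda>x. F (p*x)) has_field_derivative deriv F (p*x0) * (p * 1)) (at x0)"
    by (rule DERIV_chain2[OF dF DERIV_cmult[OF DERIV_ident]]) (use p x0 in simp)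
  have d2: "((\<lambda>x. F x / x^2) has_field_derivative
      (deriv F x0 * x0^2 - F x0 * (of_nat 2 * (1 * x0 ^ (2 - Suc 0)))) / (x0^2 * x0^2)) (at x0)"
    by (rule DERIV_divide[OF dF[OF x0(1)] DERIV_power[OF DERIV_ident]]) (use x0 in simp)
  have d3: "((\<lambda>x. F (p*x)) has_field_derivative
      (deriv F x0 * x0^2 - F x0 * (of_nat 2 * (1 * x0 ^ (2 - Suc 0)))) / (x0^2 * x0^2)) (at x0)"
    by (rule has_field_derivative_transform_within_open[OF d2, of "-{0}"]) (use x0 qp in auto)
  have "deriv F (p*x0) * (p * 1) = (deriv F x0 * x0^2 - F x0 * (of_nat 2 * (1 * x0 ^ (2 - Suc 0)))) / (x0^2 * x0^2)"
    using DERIV_unique[OF d1 d3] .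
  then show ?thesis using x0 p by (simp add: field_simps power2_eq_square)
qed

lemma powi_prop:
  fixes p :: complex
  assumes p: "p \<noteq> 0"
    and up: "\<And>x. x \<noteq> 0 \<Longrightarrow> P x \<Longrightarrow> P (p*x)"
    and down: "\<And>x. x \<noteq> 0 \<Longrightarrow> P x \<Longrightarrow> P (x/p)"
    and x0: "x0 \<noteq> 0" "P x0"
  shows "P (p powi k * x0)"
proof (induction k rule: int_induct[where k = 0])
  case base then show ?case using x0 by simp
next
  case (step1 i)
  have "p powi (i+1) * x0 = p * (p powi i * x0)" using p by (simp add: power_int_add)
  moreover have "P (p * (p powi i * x0))" using up[OF _ step1(2)] p x0 by simp
  ultimately show ?case by metis
next
  case (step2 i)
  have "p powi (i-1) * x0 = (p powi i * x0) / p" using p by (simp add: power_int_diff)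
  moreover have "P ((p powi i * x0) / p)" using down[OF _ step2(2)] p x0 by simp
  ultimately show ?case by metis
qed

lemma remov:
  fixes N D :: "complex \<Rightarrow> complex"
  assumes hN: "N holomorphic_on S" and hD: "D holomorphic_on S" and S: "open S" "x0 \<in> S"
    and z: "N x0 = 0" "D x0 = 0" "deriv D x0 \<noteq> 0"
  shows "(\<lambda>x. if D x = 0 then deriv N x / deriv D x else N x / D x) field_differentiable (at x0)"
proof -
  define N1 where "N1 = (\<lambda>z. if z = x0 then deriv N x0 else (N z - N x0) / (z - x0))"
  define D1 where "D1 = (\<lambda>z. if z = x0 then deriv D x0 else (D z - D x0) / (z - x0))"
  have h1: "N1 holomorphic_on S" unfolding N1_def by (rule pole_lemma_open[OF hN S(1)])
  have h2: "D1 holomorphic_on S" unfolding D1_def by (rule pole_lemma_open[OF hD S(1)])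
  have "isCont D1 x0" using h2 S by (meson continuous_on_eq_continuous_at holomorphic_on_imp_continuous_on)
  moreover have "D1 x0 \<noteq> 0" using z unfolding D1_def by simp
  ultimately obtain e where e0: "e > 0" "\<forall>y. dist x0 y < e \<longrightarrow> D1 y \<noteq> 0"
    using continuous_at_avoid by blast
  then have e: "e > 0" "\<And>y. dist y x0 < e \<Longrightarrow> D1 y \<noteq> 0" by (auto simp: dist_commute)
  obtain e2 where e2: "e2 > 0" "ball x0 e2 \<subseteq> S" using S openE by blast
  define B where "B = ball x0 (min e e2)"
  have B: "open B" "x0 \<in> B" "B \<subseteq> S" using e e2 unfolding B_def by auto
  have hB: "(\<lambda>x. N1 x / D1 x) holomorphic_on B"
    using e B by (intro holomorphic_on_divide holomorphic_on_subset[OF h1] holomorphic_on_subset[OF h2])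
       (auto simp: B_def dist_commute)
  have eq: "(\<lambda>x. if D x = 0 then deriv N x / deriv D x else N x / D x) x = N1 x / D1 x" if "x \<in> B" for x
  proof (cases "x = x0")
    case True then show ?thesis using z unfolding N1_def D1_def by simp
  next
    case False
    have "D1 x \<noteq> 0" using e that by (auto simp: B_def dist_commute)
    then have "D x \<noteq> 0" using False z unfolding D1_def by auto
    then show ?thesis using False z unfolding N1_def D1_def by (simp add: field_simps)
  qed
  have "(\<lambda>x. if D x = 0 then deriv N x / deriv D x else N x / D x) holomorphic_on B"
    by (rule holomorphic_transform[OF hB]) (use eq in simp)
  then show ?thesis using B holomorphic_on_imp_differentiable_at by blast
qed



definition AFN :: "complex \<Rightarrow> complex \<Rightarrow> complex \<Rightarrow> complex \<Rightarrow> complex \<Rightarrow> complex" where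
  "AFN p y u v x = theta (x*y) p * theta (x/y) p * theta (u * v) p * theta (u/v) p
     - theta (x * v) p * theta (x/v) p * theta (u*y) p * theta (u/y) p
     - u/y * theta (y * v) p * theta (y/v) p * theta (x*u) p * theta (x/u) p"

definition AFD :: "complex \<Rightarrow> complex \<Rightarrow> complex \<Rightarrow> complex" where
  "AFD p u x = theta (x*u) p * theta (x/u) p"

lemma theta_pair_p:
  assumes "norm p < 1" "p \<noteq> 0" "x \<noteq> 0" "w \<noteq> 0"
  shows "theta (p*x*w) p * theta (p*x/w) p = theta (x*w) p * theta (x/w) p / x^2"
proof -
  have a: "theta (p*x*w) p = - theta (x*w) p / (x*w)"
    using theta_p[OF assms(1), of "x*w"] assms by (simp add: mult.assoc)
  have b: "theta (p*x/w) p = - theta (x/w) p / (x/w)"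
    using theta_p[OF assms(1), of "x/w"] assms by (simp add: times_divide_eq_right)
  show ?thesis unfolding a b using assms by (simp add: field_simps power2_eq_square)
qed

lemma AFN_qp:
  assumes "norm p < 1" "p \<noteq> 0" "x \<noteq> 0" "y \<noteq> 0" "u \<noteq> 0" "v \<noteq> 0"
  shows "AFN p y u v (p*x) = AFN p y u v x / x^2"
proof -
  have 1: "theta (p*x*y) p * theta (p*x/y) p = theta (x*y) p * theta (x/y) p / x^2"
    using theta_pair_p assms by blast
  have 2: "theta (p*x * v) p * theta (p*x/v) p = theta (x * v) p * theta (x/v) p / x^2"
    using theta_pair_p assms by blast
  have 3: "theta (p*x*u) p * theta (p*x/u) p = theta (x*u) p * theta (x/u) p / x^2"
    using theta_pair_p assms by blast
  have "AFN p y u v (p*x) = (theta (p*x*y) p * theta (p*x/y) p) * theta (u * v) p * theta (u/v) p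
     - (theta (p*x * v) p * theta (p*x/v) p) * theta (u*y) p * theta (u/y) p
     - u/y * theta (y * v) p * theta (y/v) p * (theta (p*x*u) p * theta (p*x/u) p)"
    unfolding AFN_def by (simp add: mult_ac)
  also have "\<dots> = AFN p y u v x / x^2"
    unfolding 1 2 3 AFN_def using assms by (simp add: field_simps)
  finally show ?thesis .
qed

lemma AFD_qp:
  assumes "norm p < 1" "p \<noteq> 0" "x \<noteq> 0" "u \<noteq> 0"
  shows "AFD p u (p*x) = AFD p u x / x^2"
  unfolding AFD_def using theta_pair_p assms by blast

lemma theta_holo_comp:
  assumes "norm p < 1" "f holomorphic_on S" "\<And>x. x \<in> S \<Longrightarrow> f x \<noteq> 0"
  shows "(\<lambda>x. theta (f x) p) holomorphic_on S"
proof -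
  have "((\<lambda>w. theta w p) \<circ> f) holomorphic_on S"
    by (rule holomorphic_on_compose_gen[OF assms(2) theta_holo[OF assms(1), of "-{0}"]]) (use assms in auto)
  then show ?thesis by (simp add: o_def)
qed

lemma AFN_holo:
  assumes "norm p < 1" "y \<noteq> 0" "u \<noteq> 0" "v \<noteq> 0"
  shows "AFN p y u v holomorphic_on -{0}"
proof -
  have h: "(\<lambda>x. theta (x*c) p) holomorphic_on -{0}" "(\<lambda>x. theta (x/c) p) holomorphic_on -{0}"
    if "c \<noteq> 0" for c
    using that by (auto intro!: theta_holo_comp[OF assms(1)] holomorphic_intros)
  show ?thesis unfolding AFN_def[abs_def]
    using assms by (intro holomorphic_intros h)
qed

lemma AFD_holo:
  assumes "norm p < 1" "u \<noteq> 0"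
  shows "AFD p u holomorphic_on -{0}"
proof -
  have h: "(\<lambda>x. theta (x*c) p) holomorphic_on -{0}" "(\<lambda>x. theta (x/c) p) holomorphic_on -{0}"
    if "c \<noteq> 0" for c
    using that by (auto intro!: theta_holo_comp[OF assms(1)] holomorphic_intros)
  show ?thesis unfolding AFD_def[abs_def]
    using assms by (intro holomorphic_intros h)
qed

lemma theta_d1:
  assumes "norm p < 1"
  shows "((\<lambda>w. theta w p) has_field_derivative - (qpoch_inf p p * qpoch_inf p p)) (at 1)"
proof -
  define R where "R = (\<lambda>w. qpoch_inf (p*w) p * qpoch_inf (p/w) p)"
  have eq: "(\<lambda>w. theta w p) = (\<lambda>w. (1 - w) * R w)"
    unfolding R_def theta_def by (rule ext) (subst qp_shift[OF assms], simp)
  have hR: "R holomorphic_on -{0}" unfolding R_def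
    by (intro holomorphic_intros holomorphic_on_compose[OF _ qp_holo[OF assms], unfolded o_def]) auto
  have dR: "(R has_field_derivative deriv R 1) (at 1)"
    using hR by (intro holomorphic_derivI) auto
  note dd = DERIV_mult[OF DERIV_diff[OF DERIV_const[of "1::complex"] DERIV_ident] dR]
  show ?thesis unfolding eq using dd unfolding R_def by simp
qed

lemma theta_d1_nz:
  assumes "norm p < 1"
  shows "deriv (\<lambda>w. theta w p) 1 \<noteq> 0"
  using DERIV_imp_deriv[OF theta_d1[OF assms]] qp_p_nonzero[OF assms] by simp

lemma theta_hasderiv:
  assumes "norm p < 1" "w \<noteq> 0"
  shows "((\<lambda>w. theta w p) has_field_derivative deriv (\<lambda>w. theta w p) w) (at w)"
  using theta_holo[OF assms(1), of "-{0}"] assms by (intro holomorphic_derivI) auto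

lemma AFD_deriv_u:
  assumes "norm p < 1" "u \<noteq> 0" "theta (u*u) p \<noteq> 0"
  shows "deriv (AFD p u) u \<noteq> 0"
proof -
  let ?T = "\<lambda>w. theta w p"
  have d1: "((\<lambda>x. theta (x*u) p) has_field_derivative deriv ?T (u*u) * (1 * u)) (at u)"
    by (rule DERIV_chain2[OF theta_hasderiv[OF assms(1)] DERIV_cmult_right[OF DERIV_ident]]) (use assms in simp)
  have "((\<lambda>x. theta (x/u) p) has_field_derivative deriv ?T (u/u) * (1 / u)) (at u)"
    by (rule DERIV_chain2[OF theta_hasderiv[OF assms(1)] DERIV_cdivide[OF DERIV_ident]]) (use assms in simp)
  then have d2: "((\<lambda>x. theta (x/u) p) has_field_derivative deriv ?T 1 * (1 / u)) (at u)"
    using assms by simp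
  have AE: "AFD p u = (\<lambda>x. theta (x*u) p * theta (x/u) p)" by (rule ext) (simp add: AFD_def)
  note dd = DERIV_mult[OF d1 d2]
  then have "deriv (AFD p u) u = theta (u*u) p * (deriv ?T 1 * (1 / u))"
    unfolding AE using assms theta_1[OF assms(1)] DERIV_imp_deriv[OF dd] by simp
  then show ?thesis using assms theta_d1_nz[OF assms(1)] by simp
qed

lemma AFD_deriv_invu:
  assumes "norm p < 1" "u \<noteq> 0" "theta (u*u) p \<noteq> 0"
  shows "deriv (AFD p u) (inverse u) \<noteq> 0"
proof -
  let ?T = "\<lambda>w. theta w p"
  have "((\<lambda>x. theta (x*u) p) has_field_derivative deriv ?T (inverse u*u) * (1 * u)) (at (inverse u))"
    by (rule DERIV_chain2[OF theta_hasderiv[OF assms(1)] DERIV_cmult_right[OF DERIV_ident]]) (use assms in simp)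
  then have d1: "((\<lambda>x. theta (x*u) p) has_field_derivative deriv ?T 1 * (1 * u)) (at (inverse u))"
    using assms by simp
  have d2: "((\<lambda>x. theta (x/u) p) has_field_derivative deriv ?T (inverse u/u) * (1 / u)) (at (inverse u))"
    by (rule DERIV_chain2[OF theta_hasderiv[OF assms(1)] DERIV_cdivide[OF DERIV_ident]]) (use assms in simp)
  have AE: "AFD p u = (\<lambda>x. theta (x*u) p * theta (x/u) p)" by (rule ext) (simp add: AFD_def)
  note dd = DERIV_mult[OF d1 d2]
  then have "deriv (AFD p u) (inverse u) = (deriv ?T 1 * (1 * u)) * theta (inverse u/u) p"
    unfolding AE using assms theta_1[OF assms(1)] DERIV_imp_deriv[OF dd] by simp
  moreover have "theta (inverse u/u) p = - theta (u*u) p / (u*u)"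
    using theta_inv[OF assms(1), of "u*u"] assms by (simp add: field_simps)
  ultimately show ?thesis using assms theta_d1_nz[OF assms(1)] by simp
qed



lemma decomp_real:
  fixes a r :: real
  assumes "0 < a" "a < 1" "0 < r"
  shows "\<exists>k::int. a * a powi k < r \<and> r \<le> a powi k"
proof -
  define L where "L = ln a"
  have L: "L < 0" using assms unfolding L_def by simp
  define k where "k = floor (ln r / L)"
  have k1: "of_int k \<le> ln r / L" and k2: "ln r / L < of_int k + 1"
    unfolding k_def by linarith+
  have "of_int k * L \<ge> ln r" using k1 L by (simp add: pos_divide_le_eq neg_le_divide_eq mult.commute)
  moreover have "(of_int k + 1) * L < ln r" using k2 L by (simp add: neg_divide_less_eq mult.commute)
  moreover have "a powi k = exp (of_int k * L)"
    using exp_power_int[of L k] assms unfolding L_def by simp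
  moreover have "a * a powi k = exp ((of_int k + 1) * L)"
    using exp_power_int[of L k] assms unfolding L_def by (simp add: distrib_right exp_add)
  ultimately show ?thesis using assms
    by (metis exp_le_cancel_iff exp_less_cancel_iff exp_ln)
qed

lemma decomp:
  fixes p x :: complex
  assumes "0 < norm p" "norm p < 1" "x \<noteq> 0"
  shows "\<exists>k::int. \<exists>w. x = p powi k * w \<and> norm p \<le> norm w \<and> norm w \<le> 1"
proof -
  obtain k :: int where k: "norm p * norm p powi k < norm x" "norm x \<le> norm p powi k"
    using decomp_real[of "norm p" "norm x"] assms by auto
  have pk: "norm p powi k > 0" using assms by simp
  have p0: "p \<noteq> 0" using assms by auto
  define w where "w = x / p powi k"
  have "x = p powi k * w" unfolding w_def using p0 by simp
  moreover have "norm w = norm x / norm p powi k" unfolding w_def by (simp add: norm_divide norm_power_int)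
  ultimately show ?thesis using k pk
    by (intro exI[of _ k] exI[of _ w]) (auto simp: field_simps)
qed

lemma AFN_u:
  assumes "norm p < 1" "u \<noteq> 0"
  shows "AFN p y u v u = 0"
  unfolding AFN_def using assms theta_1[OF assms(1)] by (simp add: mult_ac)

lemma AFN_invu:
  assumes "norm p < 1" "u \<noteq> 0" "y \<noteq> 0" "v \<noteq> 0"
  shows "AFN p y u v (inverse u) = 0"
proof -
  have 1: "theta (inverse u * y) p = - theta (u/y) p / (u/y)"
    using theta_inv[OF assms(1), of "u/y"] assms by (simp add: field_simps)
  have 2: "theta (inverse u / y) p = - theta (u*y) p / (u*y)"
    using theta_inv[OF assms(1), of "u*y"] assms by (simp add: field_simps)
  have 3: "theta (inverse u * v) p = - theta (u/v) p / (u/v)"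
    using theta_inv[OF assms(1), of "u/v"] assms by (simp add: field_simps)
  have 4: "theta (inverse u / v) p = - theta (u * v) p / (u * v)"
    using theta_inv[OF assms(1), of "u * v"] assms by (simp add: field_simps)
  have 5: "theta (inverse u * u) p = 0" using assms theta_1[OF assms(1)] by simp
  show ?thesis unfolding AFN_def 1 2 3 4 5 using assms by (simp add: field_simps)
qed

lemma AFN_y:
  assumes "norm p < 1" "u \<noteq> 0" "y \<noteq> 0" "v \<noteq> 0"
  shows "AFN p y u v y = 0"
proof -
  have 1: "theta (y / u) p = - theta (u/y) p / (u/y)"
    using theta_inv[OF assms(1), of "u/y"] assms by (simp add: field_simps)
  have 2: "theta (y / y) p = 0" using assms theta_1[OF assms(1)] by simp
  have 3: "theta (y * u) p = theta (u * y) p" by (simp add: mult.commute)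
  show ?thesis unfolding AFN_def 1 2 3 using assms by (simp add: field_simps)
qed

lemma AFD_zero:
  assumes "norm p < 1" "p \<noteq> 0" "u \<noteq> 0" "x \<noteq> 0" "AFD p u x = 0"
  shows "\<exists>k::int. x = p powi k * u \<or> x = p powi k * inverse u"
proof -
  have "theta (x*u) p = 0 \<or> theta (x/u) p = 0" using assms(5) unfolding AFD_def by simp
  then show ?thesis
  proof
    assume "theta (x*u) p = 0"
    then obtain k where "x*u = p powi k" using theta_zero[OF assms(1) _ assms(2)] assms by fastforce
    then have "x = p powi k * inverse u" using assms by (simp add: field_simps)
    then show ?thesis by blast
  next
    assume "theta (x/u) p = 0"
    then obtain k where "x/u = p powi k" using theta_zero[OF assms(1) _ assms(2)] assms by fastforce
    then have "x = p powi k * u" using assms by (simp add: field_simps)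
    then show ?thesis by blast
  qed
qed



lemma AF_generic:
  assumes p1: "norm p < 1" and p0: "p \<noteq> 0" and nz: "y \<noteq> 0" "u \<noteq> 0" "v \<noteq> 0"
    and gu: "theta (u*u) p \<noteq> 0" and gy: "AFD p u y \<noteq> 0" and x: "x \<noteq> 0"
  shows "AFN p y u v x = 0"
proof -
  define N where "N = AFN p y u v"
  define D where "D = AFD p u"
  define G where "G = (\<lambda>x. if D x = 0 then deriv N x / deriv D x else N x / D x)"
  define P where "P = (\<lambda>x. N x = 0 \<and> D x = 0 \<and> deriv D x \<noteq> 0)"
  have hN: "N holomorphic_on -{0}" unfolding N_def using AFN_holo p1 nz by blast
  have hD: "D holomorphic_on -{0}" unfolding D_def using AFD_holo p1 nz by blast
  have qN: "N (p*z) = N z / z^2" if "z \<noteq> 0" for z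
    unfolding N_def using AFN_qp p1 p0 nz that by blast
  have qD: "D (p*z) = D z / z^2" if "z \<noteq> 0" for z
    unfolding D_def using AFD_qp p1 p0 nz that by blast
  have Pup: "P (p*z)" if "z \<noteq> 0" "P z" for z
  proof -
    have "deriv D (p*z) = deriv D z / (p * z^2)"
      using qp_deriv[OF hD qD p0 that(1)] that(2) unfolding P_def by blast
    then show ?thesis using that p0 qN qD unfolding P_def by simp
  qed
  have Pdown: "P (z/p)" if "z \<noteq> 0" "P z" for z
  proof -
    define w where "w = z / p"
    have w: "w \<noteq> 0" "z = p * w" unfolding w_def using that p0 by auto
    have "N w = 0" using qN[OF w(1)] that(2) w unfolding P_def by simp
    moreover have "D w = 0" using qD[OF w(1)] that(2) w unfolding P_def by simp
    moreover have "deriv D z = deriv D w / (p * w^2)"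
      using qp_deriv[OF hD qD p0 w(1) \<open>D w = 0\<close>] w by simp
    ultimately show ?thesis using that w p0 unfolding P_def w_def by auto
  qed
  have Pu: "P u" unfolding P_def N_def D_def
    using AFN_u[OF p1 nz(2)] AFD_deriv_u[OF p1 nz(2) gu] theta_1[OF p1] nz
    by (simp add: AFD_def)
  have Pinvu: "P (inverse u)" unfolding P_def N_def D_def
    using AFN_invu[OF p1 nz(2,1,3)] AFD_deriv_invu[OF p1 nz(2) gu] theta_1[OF p1] nz
    by (simp add: AFD_def)
  have zP: "P z" if zz: "z \<noteq> 0" "D z = 0" for z
  proof -
    obtain k where "z = p powi k * u \<or> z = p powi k * inverse u"
      using AFD_zero[OF p1 p0 nz(2) zz(1)] zz(2) unfolding D_def by blast
    then show ?thesis
      using powi_prop[of p P, OF p0 Pup Pdown] Pu Pinvu nz by auto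
  qed
  have hG: "G holomorphic_on -{0}"
  proof (rule holomorphic_onI)
      fix z :: complex assume z: "z \<in> -{0}"
      have "G field_differentiable at z"
      proof (cases "D z = 0")
        case True
        then have "P z" using zP z by simp
        then show ?thesis unfolding G_def P_def
          by (intro remov[OF hN hD]) (use z in auto)
      next
        case False
        define U where "U = -{0} \<inter> D -` (-{0})"
        have oU: "open U" unfolding U_def
          by (rule continuous_open_preimage[OF holomorphic_on_imp_continuous_on[OF hD]]) auto
        have "(\<lambda>x. N x / D x) holomorphic_on U" unfolding U_def
          by (intro holomorphic_on_divide holomorphic_on_subset[OF hN] holomorphic_on_subset[OF hD]) auto
        then have "G holomorphic_on U"
          by (rule holomorphic_transform) (auto simp: G_def U_def)
        moreover have "z \<in> U" using z False unfolding U_def by auto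
        ultimately show ?thesis using oU holomorphic_on_imp_differentiable_at by blast
      qed
      then show "G field_differentiable at z within -{0}" by (rule field_differentiable_at_within)
  qed
  have Gp: "G (p*z) = G z" if "z \<noteq> 0" for z
  proof (cases "D z = 0")
    case True
    then have "P z" "P (p*z)" using zP that Pup by auto
    moreover have "deriv D (p*z) = deriv D z / (p * z^2)" "deriv N (p*z) = deriv N z / (p * z^2)"
      using qp_deriv[OF hD qD p0 that] qp_deriv[OF hN qN p0 that] \<open>P z\<close> unfolding P_def by auto
    ultimately show ?thesis unfolding G_def P_def using that p0 by simp
  next
    case False
    then have "D (p*z) \<noteq> 0" using qD that by simp
    then show ?thesis unfolding G_def using False qD qN that by simp
  qed
  have Gpowi: "G (p powi k * z) = G z" if "z \<noteq> 0" for k z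
  proof -
    have "(\<lambda>w. G w = G z) (p powi k * z)"
    proof (rule powi_prop[OF p0 _ _ that])
      show "G (p * w) = G z" if "w \<noteq> 0" "G w = G z" for w using Gp that by simp
      show "G (w / p) = G z" if "w \<noteq> 0" "G w = G z" for w
        using Gp[of "w/p"] that p0 by simp
    qed simp
    then show ?thesis by simp
  qed
  define K where "K = cball (0::complex) 1 \<inter> - ball 0 (norm p)"
  have Ksub: "K \<subseteq> -{0}" unfolding K_def using p0 by auto
  have "compact K" unfolding K_def by (intro compact_Int_closed) auto
  then have "compact (G ` K)"
    by (rule compact_continuous_image[OF holomorphic_on_imp_continuous_on[OF holomorphic_on_subset[OF hG Ksub]]])
  then obtain B where B: "\<And>z. z \<in> K \<Longrightarrow> norm (G z) \<le> B"
    using compact_imp_bounded bounded_iff by (metis imageI)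
  have Gbd: "norm (G z) \<le> B" if zz: "z \<noteq> 0" for z
  proof -
    obtain k w where kw: "z = p powi k * w" "norm p \<le> norm w" "norm w \<le> 1"
      using decomp[of p z] p0 p1 zz by auto
    have "w \<noteq> 0" using kw p0 by auto
    then have "G z = G w" using Gpowi kw by simp
    moreover have "w \<in> K" using kw unfolding K_def by auto
    ultimately show ?thesis using B by simp
  qed
  have hH: "(G \<circ> exp) holomorphic_on UNIV"
    by (rule holomorphic_on_compose_gen[OF holomorphic_on_exp hG]) auto
  have "bounded (range (G \<circ> exp))"
    unfolding bounded_iff using Gbd exp_not_eq_zero by (metis comp_apply rangeE)
  then have "(G \<circ> exp) constant_on UNIV" using Liouville_theorem[OF hH] by blast
  then obtain c where c: "\<And>t. G (exp t) = c" unfolding constant_on_def by auto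
  have Gc: "G z = c" if "z \<noteq> 0" for z using c[of "Ln z"] that by simp
  have "G y = 0" unfolding G_def N_def D_def using gy AFN_y[OF p1 nz(2,1,3)] by simp
  then have G0: "G z = 0" if "z \<noteq> 0" for z using Gc that nz by metis
  show ?thesis
  proof (cases "D x = 0")
    case True then show ?thesis using zP x unfolding P_def N_def by auto
  next
    case False then show ?thesis using G0[OF x] unfolding G_def N_def by simp
  qed
qed



lemma qp00: "qpoch_inf 0 0 = 1"
  unfolding qpoch_inf_def by simp

lemma theta0:
  assumes "z \<noteq> 0"
  shows "theta z 0 = 1 - z"
proof -
  have "qpoch_inf z 0 = (1 - z) * qpoch_inf (0*z) 0" by (rule qp_shift) simp
  then show ?thesis unfolding theta_def using qp00 by simp
qed

lemma AF_p0:
  assumes "x \<noteq> 0" "y \<noteq> 0" "u \<noteq> 0" "v \<noteq> 0"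
  shows "AFN 0 y u v x = 0"
  unfolding AFN_def using assms by (simp add: theta0 field_simps)

lemma sq_cases:
  fixes u c :: complex
  assumes "u * u = c"
  shows "u = csqrt c \<or> u = - csqrt c"
proof -
  have "(csqrt c)^2 = c" by simp
  then have "u^2 = (csqrt c)^2" using assms by (metis power2_eq_square)
  then show ?thesis using power2_eq_iff by blast
qed

lemma AF_all:
  assumes p1: "norm p < 1" and nz: "x \<noteq> 0" "y \<noteq> 0" "u0 \<noteq> 0" "v \<noteq> 0"
  shows "AFN p y u0 v x = 0"
proof (cases "p = 0")
  case True then show ?thesis using AF_p0 nz by simp
next
  case False
  then have p0: "p \<noteq> 0" .
  define \<Phi> where "\<Phi> = (\<lambda>u. AFN p y u v x)"
  have hPhi: "\<Phi> holomorphic_on -{0}"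
  proof -
    have h1: "(\<lambda>u. theta (u*c) p) holomorphic_on -{0}" "(\<lambda>u. theta (u/c) p) holomorphic_on -{0}"
      "(\<lambda>u. theta (c*u) p) holomorphic_on -{0}" "(\<lambda>u. theta (c/u) p) holomorphic_on -{0}"
      if "c \<noteq> 0" for c
      using that by (auto intro!: theta_holo_comp[OF p1] holomorphic_intros)
    show ?thesis unfolding \<Phi>_def AFN_def using nz by (intro holomorphic_intros h1)
  qed
  define C where "C = (\<Union>k::int. {csqrt (p powi k), - csqrt (p powi k), p powi k / y, y / p powi k})"
  have cC: "countable C" unfolding C_def by (rule countable_UN) auto
  have good: "\<Phi> w = 0" if ww: "w \<noteq> 0" "w \<notin> C" for w
  proof -
    have "theta (w*w) p \<noteq> 0"
    proof
      assume "theta (w*w) p = 0"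
      then obtain k where "w*w = p powi k" using theta_zero[OF p1 _ p0] ww by fastforce
      then have "w = csqrt (p powi k) \<or> w = - csqrt (p powi k)" by (rule sq_cases)
      then show False using ww unfolding C_def by blast
    qed
    moreover have "AFD p w y \<noteq> 0"
    proof
      assume "AFD p w y = 0"
      then have "theta (y*w) p = 0 \<or> theta (y/w) p = 0" unfolding AFD_def by simp
      then show False
      proof
        assume "theta (y*w) p = 0"
        then obtain k where "y*w = p powi k" using theta_zero[OF p1 _ p0] ww nz by fastforce
        then have "w = p powi k / y" using nz by (simp add: field_simps)
        then show False using ww unfolding C_def by blast
      next
        assume "theta (y/w) p = 0"
        then obtain k where "y/w = p powi k" using theta_zero[OF p1 _ p0] ww nz by fastforce
        then have "w = y / p powi k" using nz ww p0 by (simp add: field_simps)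
        then show False using ww unfolding C_def by blast
      qed
    qed
    ultimately show ?thesis unfolding \<Phi>_def using AF_generic[OF p1 p0 nz(2) ww(1) nz(4)] nz by blast
  qed
  have cont: "isCont \<Phi> u0"
    using hPhi nz by (meson ComplI continuous_on_eq_continuous_at holomorphic_on_imp_continuous_on open_Compl closed_singleton singletonD)
  show ?thesis
  proof (rule ccontr)
    assume "AFN p y u0 v x \<noteq> 0"
    then have "\<Phi> u0 \<noteq> 0" unfolding \<Phi>_def .
    then obtain e where e: "e > 0" "\<forall>w. dist u0 w < e \<longrightarrow> \<Phi> w \<noteq> 0"
      using continuous_at_avoid[OF cont] by blast
    define e' where "e' = min e (norm u0)"
    have "e' > 0" unfolding e'_def using e nz by simp
    then have "uncountable (ball u0 e')" by (rule uncountable_ball)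
    moreover have "countable (C \<union> {u0})" using cC by simp
    ultimately obtain w where w: "w \<in> ball u0 e'" "w \<notin> C \<union> {u0}"
      by (metis countable_subset subsetI)
    have "w \<noteq> 0" using w unfolding e'_def by (auto simp: dist_norm)
    then have "\<Phi> w = 0" using good w by blast
    moreover have "dist u0 w < e" using w unfolding e'_def by auto
    ultimately show False using e by blast
  qed
qed

lemma W4:
  assumes p1: "norm p < 1" and nz: "a \<noteq> 0" "b \<noteq> 0" "c \<noteq> 0" "x \<noteq> 0"
  shows "theta (a*x) p * theta (b*x) p * theta (c*x) p * theta (a*x/(b*c)) p
       - theta x p * theta (a*x/b) p * theta (a*x/c) p * theta (b*c*x) p
       = x * theta (a*x*x) p * theta b p * theta c p * theta (a/(b*c)) p"
proof -
  define r where "r = csqrt (b*c)"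
  have rr: "r*r = b*c" unfolding r_def by (metis power2_csqrt power2_eq_square)
  have r0: "r \<noteq> 0" using rr nz by auto
  define X where "X = a*x/r"
  define Y where "Y = r"
  define U where "U = x*r"
  define V where "V = b/r"
  have X0: "X \<noteq> 0" "Y \<noteq> 0" "U \<noteq> 0" "V \<noteq> 0" unfolding X_def Y_def U_def V_def using nz r0 by auto
  have e1: "X*Y = a*x" unfolding X_def Y_def using r0 by simp
  have e2: "X/Y = a*x/(b*c)" unfolding X_def Y_def using r0 by (simp add: rr[symmetric])
  have e3: "U*V = b*x" unfolding U_def V_def using r0 by simp
  have e4: "U/V = c*x" unfolding U_def V_def using r0 nz rr by (simp add: field_simps)
  have e5: "X*V = a*x/c" unfolding X_def V_def using r0 nz by (simp add: rr field_simps)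
  have e6: "X/V = a*x/b" unfolding X_def V_def using r0 nz by (simp add: field_simps)
  have e7: "U*Y = b*c*x" unfolding U_def Y_def using r0 by (simp add: rr[symmetric] mult_ac)
  have e8: "U/Y = x" unfolding U_def Y_def using r0 by simp
  have e9: "Y*V = b" unfolding Y_def V_def using r0 by simp
  have e10: "Y/V = c" unfolding Y_def V_def using r0 nz rr by (simp add: field_simps)
  have e11: "X*U = a*x*x" unfolding X_def U_def using r0 by simp
  have e12: "X/U = a/(b*c)" unfolding X_def U_def using r0 nz by (simp add: rr[symmetric])
  have "AFN p Y U V X = 0" using AF_all[OF p1 X0(1,2,3,4)] .
  then have "theta (a*x) p * theta (a*x/(b*c)) p * theta (b*x) p * theta (c*x) p
     - theta (a*x/c) p * theta (a*x/b) p * theta (b*c*x) p * theta x p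
     - x * theta b p * theta c p * theta (a*x*x) p * theta (a/(b*c)) p = 0"
    unfolding AFN_def e1 e2 e3 e4 e5 e6 e7 e8 e9 e10 e11 e12 .
  then show ?thesis by (simp add: algebra_simps)
qed



lemma epoch_Suc: "epoch z q p (Suc k) = epoch z q p k * theta (z * q^k) p"
  unfolding epoch_def by simp

lemma epoch_shift: "epoch z q p (Suc k) = theta z p * epoch (z*q) q p k"
  unfolding epoch_def by (subst prod.lessThan_Suc_shift) (simp add: mult_ac)

lemma epoch_nz_le:
  assumes "k \<le> n" "epoch z q p n \<noteq> 0"
  shows "epoch z q p k \<noteq> 0"
proof -
  have "epoch z q p (k + m) \<noteq> 0 \<Longrightarrow> epoch z q p k \<noteq> 0" for m
    by (induction m) (auto simp: epoch_Suc)
  then show ?thesis using assms by (metis le_add_diff_inverse)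
qed

definition QQ :: "complex \<Rightarrow> nat \<Rightarrow> nat \<Rightarrow> complex" where
  "QQ q n k = (\<Prod>i<k. q ^ (n - Suc i))"

lemma epoch_rev:
  assumes p1: "norm p < 1" and nz: "z \<noteq> 0" "q \<noteq> 0" and w: "w * z * q^n = q"
  shows "k \<le> n \<Longrightarrow> epoch z q p n = epoch z q p (n - k) * epoch w q p k * (- z)^k * QQ q n k"
proof (induction k)
  case 0 then show ?case by (simp add: QQ_def epoch_def)
next
  case (Suc k)
  then have kn: "k < n" by simp
  have IH: "epoch z q p n = epoch z q p (n - k) * epoch w q p k * (- z)^k * QQ q n k"
    using Suc by simp
  have e1: "epoch z q p (n - k) = epoch z q p (n - Suc k) * theta (z * q^(n - Suc k)) p"
    using kn epoch_Suc[of z q p "n - Suc k"] by (simp add: Suc_diff_Suc)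
  have "q^n = q * q^(n - 1)" using kn by (metis Suc_diff_1 gr_zeroI less_nat_zero_code power_Suc)
  then have wz: "w * z * q^(n-1) = 1" using w nz by (simp add: field_simps)
  have qq: "q^k * q^(n - Suc k) = q^(n-1)" using kn by (simp add: power_add[symmetric])
  have "(z * q^(n - Suc k)) * (w * q^k) = w * z * (q^k * q^(n - Suc k))" by (simp only: mult_ac)
  also have "\<dots> = 1" using wz qq by simp
  finally have inv: "inverse (z * q^(n - Suc k)) = w * q^k" by (rule inverse_unique)
  have t: "theta (z * q^(n - Suc k)) p = - (z * q^(n - Suc k)) * theta (w * q^k) p"
    using theta_inv'[OF p1, of "z * q^(n - Suc k)"] nz inv by simp
  have QS: "QQ q n (Suc k) = QQ q n k * q^(n - Suc k)" unfolding QQ_def by simp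
  show ?case unfolding IH e1 t QS epoch_Suc[of w q p k] by (simp add: mult_ac)
qed

lemma conv_sym:
  fixes f g :: "nat \<Rightarrow> 'a::comm_ring"
  shows "(\<Sum>k=0..n. (f k - (if k = 0 then 0 else f (k - 1))) * g (n - k))
       = (\<Sum>k=0..n. (g k - (if k = 0 then 0 else g (k - 1))) * f (n - k))"
proof -
  have rev: "(\<Sum>k=0..m. f k * g (m - k)) = (\<Sum>k=0..m. g k * f (m - k))" for m
    by (subst sum.atLeastAtMost_rev) (simp add: mult.commute)
  have split: "(\<Sum>k=0..n. (f k - (if k = 0 then 0 else f (k - 1))) * g (n - k))
     = (\<Sum>k=0..n. f k * g (n - k)) - (if n = 0 then 0 else (\<Sum>k=0..n-1. f k * g (n - 1 - k)))"
    for f g :: "nat \<Rightarrow> 'a"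
  proof (cases n)
    case 0 then show ?thesis by simp
  next
    case (Suc m)
    have "(\<Sum>k=0..Suc m. (if k = 0 then 0 else f (k - 1)) * g (Suc m - k))
        = (\<Sum>k=0..m. f k * g (m - k))"
      by (subst sum.atLeast0_atMost_Suc_shift) simp
    then show ?thesis using Suc by (simp add: left_diff_distrib sum_subtractf)
  qed
  show ?thesis unfolding split[of f g] split[of g f] using rev[of n] rev[of "n-1"]
    by (cases "n = 0") (simp_all add: diff_diff_left)
qed



lemma epochs_Suc: "epochs zs q p (Suc k) = epochs zs q p k * prod_list (map (\<lambda>z. theta (z*q^k) p) zs)"
  unfolding epochs_def by (induction zs) (simp_all add: epoch_Suc mult_ac)

lemma epochs_shift: "epochs zs q p (Suc k) = prod_list (map (\<lambda>z. theta z p) zs) * epochs (map (\<lambda>z. z*q) zs) q p k"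
  unfolding epochs_def by (induction zs) (simp_all add: epoch_shift mult_ac)

lemma alg4:
  fixes Dj dp ta np x T R Th Nj :: complex
  assumes "Dj \<noteq> 0" "dp \<noteq> 0" "ta \<noteq> 0" and h: "np - dp = x*T*R" and th: "Th = ta*R"
  shows "T / ta * (Th * Nj) / (Dj * dp) * x = Nj * np / (Dj * dp) - Nj / Dj"
proof -
  have "Nj * np / (Dj * dp) - Nj / Dj = Nj * (np - dp) / (Dj * dp)"
    using assms by (simp add: field_simps)
  also have "\<dots> = Nj * (x*T*R) / (Dj * dp)" using h by simp
  also have "\<dots> = T / ta * (Th * Nj) / (Dj * dp) * x" using assms by (simp add: field_simps)
  finally show ?thesis by simp
qed

lemma F1:
  assumes p1: "norm p < 1" and nz: "a \<noteq> 0" "b \<noteq> 0" "c \<noteq> 0" "q \<noteq> 0" and ta: "theta a p \<noteq> 0"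
    and dn: "epochs [q, a*q/b, a*q/c, b*c*q] q p (Suc j) \<noteq> 0"
  shows "theta (a * q^(2 * Suc j)) p / theta a p * epochs [a, b, c, a/(b*c)] q p (Suc j)
           / epochs [q, a*q/b, a*q/c, b*c*q] q p (Suc j) * q^(Suc j)
       = epochs [a*q, b*q, c*q, a*q/(b*c)] q p (Suc j) / epochs [q, a*q/b, a*q/c, b*c*q] q p (Suc j)
         - epochs [a*q, b*q, c*q, a*q/(b*c)] q p j / epochs [q, a*q/b, a*q/c, b*c*q] q p j"
proof -
  define x where "x = q^(Suc j)"
  have x0: "x \<noteq> 0" unfolding x_def using nz by simp
  define Dj where "Dj = epochs [q, a*q/b, a*q/c, b*c*q] q p j"
  define Nj where "Nj = epochs [a*q, b*q, c*q, a*q/(b*c)] q p j"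
  define dp where "dp = theta x p * theta (a*x/b) p * theta (a*x/c) p * theta (b*c*x) p"
  define np where "np = theta (a*x) p * theta (b*x) p * theta (c*x) p * theta (a*x/(b*c)) p"
  define T where "T = theta (a*x*x) p"
  define R where "R = theta b p * theta c p * theta (a/(b*c)) p"
  have qx: "q * q^j = x" unfolding x_def by simp
  have D1: "epochs [q, a*q/b, a*q/c, b*c*q] q p (Suc j) = Dj * dp"
  proof -
    have "epochs [q, a*q/b, a*q/c, b*c*q] q p (Suc j) = Dj *
       (theta (q * q^j) p * (theta (a*q/b*q^j) p * (theta (a*q/c*q^j) p * theta (b*c*q*q^j) p)))"
      unfolding epochs_Suc Dj_def by simp
    also have "(q * q^j) = x" by (rule qx)
    also have "a*q/b*q^j = a*x/b" using qx by (simp add: field_simps)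
    also have "a*q/c*q^j = a*x/c" using qx by (simp add: field_simps)
    also have "b*c*q*q^j = b*c*x" using qx by (simp add: mult.assoc)
    finally show ?thesis unfolding dp_def by (simp add: mult_ac)
  qed
  have N1: "epochs [a*q, b*q, c*q, a*q/(b*c)] q p (Suc j) = Nj * np"
  proof -
    have "epochs [a*q, b*q, c*q, a*q/(b*c)] q p (Suc j) = Nj *
       (theta (a*q * q^j) p * (theta (b*q*q^j) p * (theta (c*q*q^j) p * theta (a*q/(b*c)*q^j) p)))"
      unfolding epochs_Suc Nj_def by simp
    also have "a*q*q^j = a*x" using qx by (simp add: mult.assoc)
    also have "b*q*q^j = b*x" using qx by (simp add: mult.assoc)
    also have "c*q*q^j = c*x" using qx by (simp add: mult.assoc)
    also have "a*q/(b*c)*q^j = a*x/(b*c)" using qx by (simp add: field_simps)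
    finally show ?thesis unfolding np_def by (simp add: mult_ac)
  qed
  have E1: "epochs [a, b, c, a/(b*c)] q p (Suc j) = (theta a p * R) * Nj"
  proof -
    have "epochs [a, b, c, a/(b*c)] q p (Suc j)
        = (theta a p * (theta b p * (theta c p * theta (a/(b*c)) p))) * epochs [a*q, b*q, c*q, a/(b*c)*q] q p j"
      unfolding epochs_shift by simp
    also have "a/(b*c)*q = a*q/(b*c)" by simp
    finally show ?thesis unfolding Nj_def R_def by (simp add: mult_ac)
  qed
  have aq: "a * q^(2 * Suc j) = a*x*x" unfolding x_def by (simp add: power_mult power2_eq_square mult_ac)
  have W: "np - dp = x*T*R"
    unfolding np_def dp_def T_def R_def using W4[OF p1 nz(1,2,3) x0] by (simp add: mult_ac)
  have "Dj * dp \<noteq> 0" using dn D1 by simp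
  then have nzs: "Dj \<noteq> 0" "dp \<noteq> 0" by auto
  show ?thesis unfolding D1 N1 E1 aq x_def[symmetric] T_def[symmetric] Dj_def[symmetric] Nj_def[symmetric]
    by (rule alg4[OF nzs ta W refl])
qed



lemma epochs_nz_le:
  assumes "k \<le> n" "epochs zs q p n \<noteq> 0"
  shows "epochs zs q p k \<noteq> 0"
  using assms(2) unfolding epochs_def
proof (induction zs)
  case Nil then show ?case by simp
next
  case (Cons z zs) then show ?case using epoch_nz_le[OF assms(1), of z q p] by auto
qed

lemma epochs0: "epochs zs q p 0 = 1"
  unfolding epochs_def epoch_def by (induction zs) auto

lemma fac_num:
  assumes p1: "norm p < 1" and nz: "A \<noteq> 0" "B \<noteq> 0" "C \<noteq> 0" "q \<noteq> 0" and kn: "k \<le> n"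
  shows "epochs [q, A*q/B, A*q/C, B*C*q] q p n = epochs [q, A*q/B, A*q/C, B*C*q] q p (n-k)
     * epochs [inverse (q^n), B*inverse (q^n)/A, C*inverse (q^n)/A, inverse (q^n)/(B*C)] q p k
     * ((A*A*q^4)^k * (QQ q n k * QQ q n k * QQ q n k * QQ q n k))"
proof -
  have r1: "epoch q q p n = epoch q q p (n-k) * epoch (inverse (q^n)) q p k * (-q)^k * QQ q n k"
    by (rule epoch_rev[OF p1 nz(4) nz(4) _ kn]) (use nz in simp)
  have r2: "epoch (A*q/B) q p n = epoch (A*q/B) q p (n-k) * epoch (B*inverse (q^n)/A) q p k * (-(A*q/B))^k * QQ q n k"
    by (rule epoch_rev[OF p1 _ nz(4) _ kn]) (use nz in \<open>simp_all add: field_simps\<close>)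
  have r3: "epoch (A*q/C) q p n = epoch (A*q/C) q p (n-k) * epoch (C*inverse (q^n)/A) q p k * (-(A*q/C))^k * QQ q n k"
    by (rule epoch_rev[OF p1 _ nz(4) _ kn]) (use nz in \<open>simp_all add: field_simps\<close>)
  have r4: "epoch (B*C*q) q p n = epoch (B*C*q) q p (n-k) * epoch (inverse (q^n)/(B*C)) q p k * (-(B*C*q))^k * QQ q n k"
    by (rule epoch_rev[OF p1 _ nz(4) _ kn]) (use nz in \<open>simp_all add: field_simps\<close>)
  have z: "(-q)^k * (-(A*q/B))^k * (-(A*q/C))^k * (-(B*C*q))^k = (A*A*q^4)^k"
  proof -
    have "(-q) * (-(A*q/B)) * (-(A*q/C)) * (-(B*C*q)) = A*A*q^4" using nz by (simp add: field_simps eval_nat_numeral)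
    then show ?thesis by (metis power_mult_distrib)
  qed
  have u: "epochs [z1, z2, z3, z4] q p m = epoch z1 q p m * (epoch z2 q p m * (epoch z3 q p m * epoch z4 q p m))"
    for z1 z2 z3 z4 m unfolding epochs_def by simp
  show ?thesis unfolding u r1 r2 r3 r4 z[symmetric] by (simp only: mult_ac)
qed

lemma fac_den:
  assumes p1: "norm p < 1" and nz: "A \<noteq> 0" "B \<noteq> 0" "C \<noteq> 0" "q \<noteq> 0" and kn: "k \<le> n"
  shows "epochs [A*q, B*q, C*q, A*q/(B*C)] q p n = epochs [A*q, B*q, C*q, A*q/(B*C)] q p (n-k)
     * epochs [inverse (q^n)/A, inverse (q^n)/B, inverse (q^n)/C, B*C*inverse (q^n)/A] q p k
     * ((A*A*q^4)^k * (QQ q n k * QQ q n k * QQ q n k * QQ q n k))"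
proof -
  have r1: "epoch (A*q) q p n = epoch (A*q) q p (n-k) * epoch (inverse (q^n)/A) q p k * (-(A*q))^k * QQ q n k"
    by (rule epoch_rev[OF p1 _ nz(4) _ kn]) (use nz in \<open>simp_all add: field_simps\<close>)
  have r2: "epoch (B*q) q p n = epoch (B*q) q p (n-k) * epoch (inverse (q^n)/B) q p k * (-(B*q))^k * QQ q n k"
    by (rule epoch_rev[OF p1 _ nz(4) _ kn]) (use nz in \<open>simp_all add: field_simps\<close>)
  have r3: "epoch (C*q) q p n = epoch (C*q) q p (n-k) * epoch (inverse (q^n)/C) q p k * (-(C*q))^k * QQ q n k"
    by (rule epoch_rev[OF p1 _ nz(4) _ kn]) (use nz in \<open>simp_all add: field_simps\<close>)
  have r4: "epoch (A*q/(B*C)) q p n = epoch (A*q/(B*C)) q p (n-k) * epoch (B*C*inverse (q^n)/A) q p k * (-(A*q/(B*C)))^k * QQ q n k"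
    by (rule epoch_rev[OF p1 _ nz(4) _ kn]) (use nz in \<open>simp_all add: field_simps\<close>)
  have z: "(-(A*q))^k * (-(B*q))^k * (-(C*q))^k * (-(A*q/(B*C)))^k = (A*A*q^4)^k"
  proof -
    have "(-(A*q)) * (-(B*q)) * (-(C*q)) * (-(A*q/(B*C))) = A*A*q^4" using nz by (simp add: field_simps eval_nat_numeral)
    then show ?thesis by (metis power_mult_distrib)
  qed
  have u: "epochs [z1, z2, z3, z4] q p m = epoch z1 q p m * (epoch z2 q p m * (epoch z3 q p m * epoch z4 q p m))"
    for z1 z2 z3 z4 m unfolding epochs_def by simp
  show ?thesis unfolding u r1 r2 r3 r4 z[symmetric] by (simp only: mult_ac)
qed



theorem mainTheorem1:
  fixes p q a b c A B C :: complex and n :: nat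
  assumes hp: "norm p < 1"
    and hq: "q \<noteq> 0"
    and hnz: "a \<noteq> 0" "b \<noteq> 0" "c \<noteq> 0" "A \<noteq> 0" "B \<noteq> 0" "C \<noteq> 0"
    and hta: "theta a p \<noteq> 0" and htA: "theta A p \<noteq> 0"
    and hd1: "epochs [q, a*q/b, a*q/c, b*c*q] q p n \<noteq> 0"
    and hd2: "epochs [inverse (q^n) / A, inverse (q^n) / B, inverse (q^n) / C,
                      B*C*inverse (q^n) / A] q p n \<noteq> 0"
    and hd3: "epochs [q, A*q/B, A*q/C, B*C*q] q p n \<noteq> 0"
    and hd4: "epochs [inverse (q^n) / a, inverse (q^n) / b, inverse (q^n) / c,
                      b*c*inverse (q^n) / a] q p n \<noteq> 0"
    and hd5: "epochs [A*q, B*q, C*q, A*q/(B*C), a*q/b, a*q/c, b*c*q] q p n \<noteq> 0"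
  shows "(\<Sum>k=0..n. theta (a * q^(2*k)) p / theta a p
            * epochs [a, b, c, a/(b*c)] q p k / epochs [q, a*q/b, a*q/c, b*c*q] q p k
            * epochs [inverse (q^n), B*inverse (q^n)/A, C*inverse (q^n)/A, inverse (q^n)/(B*C)] q p k
            / epochs [inverse (q^n)/A, inverse (q^n)/B, inverse (q^n)/C, B*C*inverse (q^n)/A] q p k
            * q^k)
       = epochs [a*q, b*q, c*q, a*q/(b*c), A*q/B, A*q/C, B*C*q] q p n
         / epochs [A*q, B*q, C*q, A*q/(B*C), a*q/b, a*q/c, b*c*q] q p n
         * (\<Sum>k=0..n. theta (A * q^(2*k)) p / theta A p
            * epochs [A, B, C, A/(B*C)] q p k / epochs [q, A*q/B, A*q/C, B*C*q] q p k
            * epochs [inverse (q^n), b*inverse (q^n)/a, c*inverse (q^n)/a, inverse (q^n)/(b*c)] q p k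
            / epochs [inverse (q^n)/a, inverse (q^n)/b, inverse (q^n)/c, b*c*inverse (q^n)/a] q p k
            * q^k)"
proof -
  note p1 = hp
  have u4: "epochs [z1, z2, z3, z4] q p m = epoch z1 q p m * (epoch z2 q p m * (epoch z3 q p m * epoch z4 q p m))"
    for z1 z2 z3 z4 m unfolding epochs_def by simp
  have u7: "epochs [z1, z2, z3, z4, z5, z6, z7] q p m = epoch z1 q p m * (epoch z2 q p m * (epoch z3 q p m
     * (epoch z4 q p m * (epoch z5 q p m * (epoch z6 q p m * epoch z7 q p m)))))"
    for z1 z2 z3 z4 z5 z6 z7 m unfolding epochs_def by simp
  define Nx where "Nx m = epochs [a*q, b*q, c*q, a*q/(b*c)] q p m" for m
  define Dx where "Dx m = epochs [q, a*q/b, a*q/c, b*c*q] q p m" for m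
  define NX where "NX m = epochs [A*q, B*q, C*q, A*q/(B*C)] q p m" for m
  define DX where "DX m = epochs [q, A*q/B, A*q/C, B*C*q] q p m" for m
  define Gxn where "Gxn k = epochs [inverse (q^n), b*inverse (q^n)/a, c*inverse (q^n)/a, inverse (q^n)/(b*c)] q p k" for k
  define Gxd where "Gxd k = epochs [inverse (q^n)/a, inverse (q^n)/b, inverse (q^n)/c, b*c*inverse (q^n)/a] q p k" for k
  define GXn where "GXn k = epochs [inverse (q^n), B*inverse (q^n)/A, C*inverse (q^n)/A, inverse (q^n)/(B*C)] q p k" for k
  define GXd where "GXd k = epochs [inverse (q^n)/A, inverse (q^n)/B, inverse (q^n)/C, B*C*inverse (q^n)/A] q p k" for k
  define Ux where "Ux m = Nx m / Dx m" for m
  define UX where "UX m = NX m / DX m" for m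
  define dUx where "dUx k = Ux k - (if k = 0 then 0 else Ux (k - 1))" for k
  define dUX where "dUX k = UX k - (if k = 0 then 0 else UX (k - 1))" for k
  define P where "P = epochs [a*q, b*q, c*q, a*q/(b*c), A*q/B, A*q/C, B*C*q] q p n
         / epochs [A*q, B*q, C*q, A*q/(B*C), a*q/b, a*q/c, b*c*q] q p n"
  define Kx where "Kx k = (a*a*q^4)^k * (QQ q n k * QQ q n k * QQ q n k * QQ q n k)" for k
  define KX where "KX k = (A*A*q^4)^k * (QQ q n k * QQ q n k * QQ q n k * QQ q n k)" for k
  have Dxn: "Dx n \<noteq> 0" using hd1 unfolding Dx_def .
  have DXn: "DX n \<noteq> 0" using hd3 unfolding DX_def .
  have NXn: "NX n \<noteq> 0" using hd5 unfolding NX_def u4 u7 by auto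
  have Dxk: "Dx k \<noteq> 0" if "k \<le> n" for k using epochs_nz_le[OF that hd1] unfolding Dx_def .
  have DXk: "DX k \<noteq> 0" if "k \<le> n" for k using epochs_nz_le[OF that hd3] unfolding DX_def .
  have Gxdk: "Gxd k \<noteq> 0" if "k \<le> n" for k using epochs_nz_le[OF that hd4] unfolding Gxd_def .
  have S1x: "theta (a * q^(2*k)) p / theta a p * epochs [a, b, c, a/(b*c)] q p k / Dx k * q^k = dUx k"
    if "k \<le> n" for k
  proof (cases k)
    case 0 then show ?thesis using hta unfolding dUx_def Ux_def Nx_def Dx_def by (simp add: epochs0)
  next
    case (Suc j)
    show ?thesis unfolding Suc dUx_def Ux_def Nx_def Dx_def
      using F1[OF p1 hnz(1,2,3) hq hta, of j] Dxk[OF that] unfolding Suc Dx_def by simp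
  qed
  have S1X: "theta (A * q^(2*k)) p / theta A p * epochs [A, B, C, A/(B*C)] q p k / DX k * q^k = dUX k"
    if "k \<le> n" for k
  proof (cases k)
    case 0 then show ?thesis using htA unfolding dUX_def UX_def NX_def DX_def by (simp add: epochs0)
  next
    case (Suc j)
    show ?thesis unfolding Suc dUX_def UX_def NX_def DX_def
      using F1[OF p1 hnz(4,5,6) hq htA, of j] DXk[OF that] unfolding Suc DX_def by simp
  qed
  have S2: "GXn k / GXd k = UX (n - k) / UX n" if kn: "k \<le> n" for k
  proof -
    have f1: "DX n = DX (n-k) * GXn k * KX k"
      unfolding DX_def GXn_def KX_def by (rule fac_num[OF p1 hnz(4,5,6) hq kn])
    have f2: "NX n = NX (n-k) * GXd k * KX k"
      unfolding NX_def GXd_def KX_def by (rule fac_den[OF p1 hnz(4,5,6) hq kn])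
    have nz: "DX (n-k) \<noteq> 0" "GXn k \<noteq> 0" "KX k \<noteq> 0" "NX (n-k) \<noteq> 0" "GXd k \<noteq> 0"
      using f1 f2 DXn NXn by auto
    show ?thesis unfolding UX_def f1 f2 using nz by (simp add: field_simps)
  qed
  have Pform: "P = Nx n * DX n / (NX n * Dx n)"
  proof -
    have "epoch q q p n \<noteq> 0" using Dxn unfolding Dx_def u4 by auto
    then show ?thesis unfolding P_def Nx_def DX_def NX_def Dx_def u4 u7
      by (simp add: field_simps)
  qed
  have S3: "P * (Gxn k / Gxd k) = Ux (n - k) / UX n" if kn: "k \<le> n" for k
  proof -
    have f1: "Dx n = Dx (n-k) * Gxn k * Kx k"
      unfolding Dx_def Gxn_def Kx_def by (rule fac_num[OF p1 hnz(1,2,3) hq kn])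
    have f2: "Nx n = Nx (n-k) * Gxd k * Kx k"
      unfolding Nx_def Gxd_def Kx_def by (rule fac_den[OF p1 hnz(1,2,3) hq kn])
    have nz: "Dx (n-k) \<noteq> 0" "Gxn k \<noteq> 0" "Kx k \<noteq> 0" "Gxd k \<noteq> 0"
      using f1 Dxn Gxdk[OF kn] by auto
    show ?thesis unfolding Pform Ux_def UX_def f1 f2 using nz NXn DXn by (simp add: field_simps)
  qed
  have L: "(\<Sum>k=0..n. theta (a * q^(2*k)) p / theta a p
            * epochs [a, b, c, a/(b*c)] q p k / epochs [q, a*q/b, a*q/c, b*c*q] q p k
            * epochs [inverse (q^n), B*inverse (q^n)/A, C*inverse (q^n)/A, inverse (q^n)/(B*C)] q p k
            / epochs [inverse (q^n)/A, inverse (q^n)/B, inverse (q^n)/C, B*C*inverse (q^n)/A] q p k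
            * q^k) = (\<Sum>k=0..n. dUx k * UX (n - k)) / UX n"
  proof -
    have "(\<Sum>k=0..n. theta (a * q^(2*k)) p / theta a p
            * epochs [a, b, c, a/(b*c)] q p k / epochs [q, a*q/b, a*q/c, b*c*q] q p k
            * epochs [inverse (q^n), B*inverse (q^n)/A, C*inverse (q^n)/A, inverse (q^n)/(B*C)] q p k
            / epochs [inverse (q^n)/A, inverse (q^n)/B, inverse (q^n)/C, B*C*inverse (q^n)/A] q p k
            * q^k) = (\<Sum>k=0..n. dUx k * (UX (n - k) / UX n))"
    proof (rule sum.cong[OF refl])
      fix k assume "k \<in> {0..n}"
      then have kn: "k \<le> n" by simp
      have "theta (a * q^(2*k)) p / theta a p
            * epochs [a, b, c, a/(b*c)] q p k / epochs [q, a*q/b, a*q/c, b*c*q] q p k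
            * epochs [inverse (q^n), B*inverse (q^n)/A, C*inverse (q^n)/A, inverse (q^n)/(B*C)] q p k
            / epochs [inverse (q^n)/A, inverse (q^n)/B, inverse (q^n)/C, B*C*inverse (q^n)/A] q p k
            * q^k = (theta (a * q^(2*k)) p / theta a p * epochs [a, b, c, a/(b*c)] q p k / Dx k * q^k)
              * (GXn k / GXd k)"
        unfolding Dx_def GXn_def GXd_def by (simp add: divide_inverse mult_ac)
      also have "\<dots> = dUx k * (UX (n - k) / UX n)" using S1x[OF kn] S2[OF kn] by simp
      finally show "theta (a * q^(2*k)) p / theta a p
            * epochs [a, b, c, a/(b*c)] q p k / epochs [q, a*q/b, a*q/c, b*c*q] q p k
            * epochs [inverse (q^n), B*inverse (q^n)/A, C*inverse (q^n)/A, inverse (q^n)/(B*C)] q p k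
            / epochs [inverse (q^n)/A, inverse (q^n)/B, inverse (q^n)/C, B*C*inverse (q^n)/A] q p k
            * q^k = dUx k * (UX (n - k) / UX n)" .
    qed
    also have "\<dots> = (\<Sum>k=0..n. dUx k * UX (n - k)) / UX n"
      by (simp add: sum_divide_distrib)
    finally show ?thesis .
  qed
  have R: "epochs [a*q, b*q, c*q, a*q/(b*c), A*q/B, A*q/C, B*C*q] q p n
         / epochs [A*q, B*q, C*q, A*q/(B*C), a*q/b, a*q/c, b*c*q] q p n
         * (\<Sum>k=0..n. theta (A * q^(2*k)) p / theta A p
            * epochs [A, B, C, A/(B*C)] q p k / epochs [q, A*q/B, A*q/C, B*C*q] q p k
            * epochs [inverse (q^n), b*inverse (q^n)/a, c*inverse (q^n)/a, inverse (q^n)/(b*c)] q p k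
            / epochs [inverse (q^n)/a, inverse (q^n)/b, inverse (q^n)/c, b*c*inverse (q^n)/a] q p k
            * q^k) = (\<Sum>k=0..n. dUX k * Ux (n - k)) / UX n"
  proof -
    have "P * (\<Sum>k=0..n. theta (A * q^(2*k)) p / theta A p
            * epochs [A, B, C, A/(B*C)] q p k / epochs [q, A*q/B, A*q/C, B*C*q] q p k
            * epochs [inverse (q^n), b*inverse (q^n)/a, c*inverse (q^n)/a, inverse (q^n)/(b*c)] q p k
            / epochs [inverse (q^n)/a, inverse (q^n)/b, inverse (q^n)/c, b*c*inverse (q^n)/a] q p k
            * q^k) = (\<Sum>k=0..n. P * (theta (A * q^(2*k)) p / theta A p
            * epochs [A, B, C, A/(B*C)] q p k / epochs [q, A*q/B, A*q/C, B*C*q] q p k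
            * epochs [inverse (q^n), b*inverse (q^n)/a, c*inverse (q^n)/a, inverse (q^n)/(b*c)] q p k
            / epochs [inverse (q^n)/a, inverse (q^n)/b, inverse (q^n)/c, b*c*inverse (q^n)/a] q p k
            * q^k))" by (simp add: sum_distrib_left)
    also have "\<dots> = (\<Sum>k=0..n. dUX k * (Ux (n - k) / UX n))"
    proof (rule sum.cong[OF refl])
      fix k assume "k \<in> {0..n}"
      then have kn: "k \<le> n" by simp
      have "P * (theta (A * q^(2*k)) p / theta A p
            * epochs [A, B, C, A/(B*C)] q p k / epochs [q, A*q/B, A*q/C, B*C*q] q p k
            * epochs [inverse (q^n), b*inverse (q^n)/a, c*inverse (q^n)/a, inverse (q^n)/(b*c)] q p k
            / epochs [inverse (q^n)/a, inverse (q^n)/b, inverse (q^n)/c, b*c*inverse (q^n)/a] q p k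
            * q^k) = (theta (A * q^(2*k)) p / theta A p * epochs [A, B, C, A/(B*C)] q p k / DX k * q^k)
              * (P * (Gxn k / Gxd k))"
        unfolding DX_def Gxn_def Gxd_def by (simp add: divide_inverse mult_ac)
      also have "\<dots> = dUX k * (Ux (n - k) / UX n)" using S1X[OF kn] S3[OF kn] by simp
      finally show "P * (theta (A * q^(2*k)) p / theta A p
            * epochs [A, B, C, A/(B*C)] q p k / epochs [q, A*q/B, A*q/C, B*C*q] q p k
            * epochs [inverse (q^n), b*inverse (q^n)/a, c*inverse (q^n)/a, inverse (q^n)/(b*c)] q p k
            / epochs [inverse (q^n)/a, inverse (q^n)/b, inverse (q^n)/c, b*c*inverse (q^n)/a] q p k
            * q^k) = dUX k * (Ux (n - k) / UX n)" .
    qed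
    also have "\<dots> = (\<Sum>k=0..n. dUX k * Ux (n - k)) / UX n"
      by (simp add: sum_divide_distrib)
    finally show ?thesis unfolding P_def .
  qed
  have C: "(\<Sum>k=0..n. dUx k * UX (n - k)) = (\<Sum>k=0..n. dUX k * Ux (n - k))"
    unfolding dUx_def dUX_def by (rule conv_sym)
  show ?thesis unfolding L R C ..
qed

end
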